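(* Let $V$ be a finite set with positive element weights ($\vert A \vert$ = total weight of $A \subseteq V$), and let $\mathcal{P}, \mathcal{P}'$ be partitions of $V$ into nonempty parts. If an optimal $C_{\wedge}$-correspondence $(\mathcal{S}, \mathcal{S}')$ is not mutual, then $\vert \mathcal{S} \vert \in \{1, \vert \mathcal{P} \vert - 1\}$ or $\vert \mathcal{S}' \vert \in \{1, \vert \mathcal{P}' \vert - 1\}$.
   Context: For $\mathcal{S}$ a set of subsets of $V$, $U_{\mathcal{S}}$ is their union. A correspondence is a pair $(\mathcal{S}, \mathcal{S}')$ with $\mathcal{S} \subseteq \mathcal{P}$, $\mathcal{S}' \subseteq \mathcal{P}'$, with cost $\vert U_{\mathcal{S}} \triangle U_{\mathcal{S}'} \vert$. A $C_{\wedge}$-correspondence is one with $\mathcal{S} \notin \{\emptyset, \mathcal{P}\}$ and $\mathcal{S}' \notin \{\emptyset, \mathcal{P}'\}$; it is optimal if its cost is minimum among all $C_{\wedge}$-correspondences. A correspondence is mutual if (1) $\vert P \cap U_{\mathcal{S}'} \vert \ge \vert P \vert/2$ for all $P \in \mathcal{S}$, (2) $\vert P \cap U_{\mathcal{S}'} \vert \le \vert P \vert/2$ for all $P \in \mathcal{P} \setminus \mathcal{S}$, (3) $\vert P' \cap U_{\mathcal{S}} \vert \ge \vert P' \vert/2$ for all $P' \in \mathcal{S}'$, and (4) $\vert P' \cap U_{\mathcal{S}} \vert \le \vert P' \vert/2$ for all $P' \in \mathcal{P}' \setminus \mathcal{S}'$. *)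

theory Defs
  imports Complex_Main "HOL-Library.Disjoint_Sets"
begin

definition wt :: "('a \<Rightarrow> real) \<Rightarrow> 'a set \<Rightarrow> real" where
  "wt w A = sum w A"

text \<open>A partition of V into nonempty parts (library notion partition_on).\<close>

definition corr_cost :: "('a \<Rightarrow> real) \<Rightarrow> 'a set set \<Rightarrow> 'a set set \<Rightarrow> real" where
  "corr_cost w S S' = wt w ((\<Union>S - \<Union>S') \<union> (\<Union>S' - \<Union>S))"

definition is_corr :: "'a set set \<Rightarrow> 'a set set \<Rightarrow> 'a set set \<Rightarrow> 'a set set \<Rightarrow> bool" where
  "is_corr P P' S S' \<longleftrightarrow> S \<subseteq> P \<and> S' \<subseteq> P'"

definition is_Cwedge_corr :: "'a set set \<Rightarrow> 'a set set \<Rightarrow> 'a set set \<Rightarrow> 'a set set \<Rightarrow> bool" where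
  "is_Cwedge_corr P P' S S' \<longleftrightarrow>
     is_corr P P' S S' \<and> S \<notin> {{}, P} \<and> S' \<notin> {{}, P'}"

definition optimal_Cwedge_corr ::
  "('a \<Rightarrow> real) \<Rightarrow> 'a set set \<Rightarrow> 'a set set \<Rightarrow> 'a set set \<Rightarrow> 'a set set \<Rightarrow> bool" where
  "optimal_Cwedge_corr w P P' S S' \<longleftrightarrow>
     is_Cwedge_corr P P' S S' \<and>
     (\<forall>T T'. is_Cwedge_corr P P' T T' \<longrightarrow> corr_cost w S S' \<le> corr_cost w T T')"

definition mutual_corr ::
  "('a \<Rightarrow> real) \<Rightarrow> 'a set set \<Rightarrow> 'a set set \<Rightarrow> 'a set set \<Rightarrow> 'a set set \<Rightarrow> bool" where
  "mutual_corr w P P' S S' \<longleftrightarrow>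
     (\<forall>X\<in>S. wt w (X \<inter> \<Union>S') \<ge> wt w X / 2) \<and>
     (\<forall>X\<in>P - S. wt w (X \<inter> \<Union>S') \<le> wt w X / 2) \<and>
     (\<forall>X\<in>S'. wt w (X \<inter> \<Union>S) \<ge> wt w X / 2) \<and>
     (\<forall>X\<in>P' - S'. wt w (X \<inter> \<Union>S) \<le> wt w X / 2)"

end

theory Submission
  imports Defs
begin

lemma delta:
  fixes w :: "'a \<Rightarrow> real"
  assumes "finite U" "finite U'" "finite X" "U \<inter> X = {}"
  shows "sum w ((U \<union> X - U') \<union> (U' - (U \<union> X))) =
         sum w ((U - U') \<union> (U' - U)) + sum w (X - U') - sum w (X \<inter> U')"
proof -
  let ?D = "(U - U') \<union> (U' - U)"
  have e: "(U \<union> X - U') \<union> (U' - (U \<union> X)) = (?D - (X \<inter> U')) \<union> (X - U')"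
    using assms(4) by blast
  have "sum w ((?D - (X \<inter> U')) \<union> (X - U')) = sum w (?D - (X \<inter> U')) + sum w (X - U')"
    by (rule sum.union_disjoint) (use assms in auto)
  moreover have "sum w (?D - (X \<inter> U')) = sum w ?D - sum w (X \<inter> U')"
    by (rule sum_diff) (use assms in auto)
  ultimately show ?thesis using e by simp
qed

lemma side:
  assumes fV: "finite V" and pP: "partition_on V P" and sub': "\<Union>S' \<subseteq> V"
    and SP: "S \<subseteq> P" and ne: "S \<noteq> {}" and nP: "S \<noteq> P"
    and opt: "\<And>T. T \<subseteq> P \<Longrightarrow> T \<noteq> {} \<Longrightarrow> T \<noteq> P \<Longrightarrow> corr_cost w S S' \<le> corr_cost w T S'"
    and nm: "\<not> ((\<forall>X\<in>S. wt w (X \<inter> \<Union>S') \<ge> wt w X / 2) \<and>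
               (\<forall>X\<in>P - S. wt w (X \<inter> \<Union>S') \<le> wt w X / 2))"
  shows "card S \<in> {1, card P - 1}"
proof -
  have UP: "\<Union>P = V" using pP by (simp add: partition_on_def)
  have fP: "finite P" using fV UP by (metis finite_UnionD)
  have disj: "\<And>X Y. X \<in> P \<Longrightarrow> Y \<in> P \<Longrightarrow> X \<noteq> Y \<Longrightarrow> X \<inter> Y = {}"
    using pP by (meson disjointD partition_on_def)
  have fin: "\<And>A. A \<subseteq> V \<Longrightarrow> finite A" using fV finite_subset by blast
  have fS: "finite (\<Union>S')" using fin sub' by blast
  have split: "X - \<Union>S' \<union> (X \<inter> \<Union>S') = X" for X by blast
  have wsplit: "wt w X = sum w (X - \<Union>S') + sum w (X \<inter> \<Union>S')" if "X \<subseteq> V" for X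
    unfolding wt_def
    by (subst sum.union_disjoint[symmetric]) (use that fin in \<open>auto simp: split\<close>)
  have fSS: "finite S" using fP SP finite_subset by blast
  have UV: "\<And>T. T \<subseteq> P \<Longrightarrow> \<Union>T \<subseteq> V" using UP by blast
  show ?thesis
  proof (rule ccontr)
    assume nc: "card S \<notin> {1, card P - 1}"
    have c1: "\<forall>X\<in>S. wt w (X \<inter> \<Union>S') \<ge> wt w X / 2"
    proof (intro ballI, rule ccontr)
      fix X assume XS: "X \<in> S" and lt: "\<not> wt w (X \<inter> \<Union>S') \<ge> wt w X / 2"
      let ?T = "S - {X}"
      have XP: "X \<in> P" using XS SP by blast
      have XV: "X \<subseteq> V" using XP UP by blast
      have Tne: "?T \<noteq> {}"
      proof
        assume "?T = {}" then have "S = {X}" using XS by blast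
        then show False using nc by simp
      qed
      have TnP: "?T \<noteq> P" using SP nP by blast
      have TP: "?T \<subseteq> P" using SP by blast
      have US: "\<Union>S = \<Union>?T \<union> X" using XS by blast
      have dj: "\<Union>?T \<inter> X = {}" using disj XP SP by blast
      have "corr_cost w S S' = corr_cost w ?T S' + sum w (X - \<Union>S') - sum w (X \<inter> \<Union>S')"
        unfolding corr_cost_def wt_def US
        by (rule delta) (use fin UV[OF TP] XV sub' dj in auto)
      moreover have "corr_cost w S S' \<le> corr_cost w ?T S'" using opt[OF TP Tne TnP] .
      ultimately show False using lt wsplit[OF XV] by (simp add: wt_def)
    qed
    have c2: "\<forall>X\<in>P - S. wt w (X \<inter> \<Union>S') \<le> wt w X / 2"
    proof (intro ballI, rule ccontr)
      fix X assume XS: "X \<in> P - S" and lt: "\<not> wt w (X \<inter> \<Union>S') \<le> wt w X / 2"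
      let ?T = "insert X S"
      have XP: "X \<in> P" using XS by blast
      have XV: "X \<subseteq> V" using XP UP by blast
      have Tne: "?T \<noteq> {}" by blast
      have TnP: "?T \<noteq> P"
      proof
        assume "?T = P" then have "card P = card S + 1" using XS fSS by auto
        then show False using nc by simp
      qed
      have TP: "?T \<subseteq> P" using SP XP by blast
      have US: "\<Union>?T = \<Union>S \<union> X" by blast
      have dj: "\<Union>S \<inter> X = {}" using disj XS SP by blast
      have "corr_cost w ?T S' = corr_cost w S S' + sum w (X - \<Union>S') - sum w (X \<inter> \<Union>S')"
        unfolding corr_cost_def wt_def US
        by (rule delta) (use fin UV[OF SP] XV sub' dj in auto)
      moreover have "corr_cost w S S' \<le> corr_cost w ?T S'" using opt[OF TP Tne TnP] .
      ultimately show False using lt wsplit[OF XV] by (simp add: wt_def)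
    qed
    show False using nm c1 c2 by blast
  qed
qed

lemma cost_sym: "corr_cost w S S' = corr_cost w S' S"
  unfolding corr_cost_def by (simp add: Un_commute)

theorem proposition12:
  fixes V :: "'a set" and w :: "'a \<Rightarrow> real" and P P' S S' :: "'a set set"
  assumes "finite V"
    and "\<And>v. v \<in> V \<Longrightarrow> w v > 0"
    and "partition_on V P" and "partition_on V P'"
    and "optimal_Cwedge_corr w P P' S S'"
    and "\<not> mutual_corr w P P' S S'"
  shows "card S \<in> {1, card P - 1} \<or> card S' \<in> {1, card P' - 1}"
proof -
  have o: "is_Cwedge_corr P P' S S'"
    "\<And>T T'. is_Cwedge_corr P P' T T' \<Longrightarrow> corr_cost w S S' \<le> corr_cost w T T'"
    using assms(5) unfolding optimal_Cwedge_corr_def by auto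
  have SP: "S \<subseteq> P" "S \<noteq> {}" "S \<noteq> P" "S' \<subseteq> P'" "S' \<noteq> {}" "S' \<noteq> P'"
    using o(1) unfolding is_Cwedge_corr_def is_corr_def by auto
  have U1: "\<Union>S \<subseteq> V" using SP assms(3) by (auto simp: partition_on_def)
  have U2: "\<Union>S' \<subseteq> V" using SP assms(4) by (auto simp: partition_on_def)
  show ?thesis
  proof (cases "(\<forall>X\<in>S. wt w (X \<inter> \<Union>S') \<ge> wt w X / 2) \<and>
               (\<forall>X\<in>P - S. wt w (X \<inter> \<Union>S') \<le> wt w X / 2)")
    case False
    have "card S \<in> {1, card P - 1}"
    proof (rule side[OF assms(1,3) U2 SP(1-3) _ False])
      fix T assume "T \<subseteq> P" "T \<noteq> {}" "T \<noteq> P"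
      then show "corr_cost w S S' \<le> corr_cost w T S'"
        using o(2) SP unfolding is_Cwedge_corr_def is_corr_def by auto
    qed
    then show ?thesis by blast
  next
    case True
    then have F: "\<not> ((\<forall>X\<in>S'. wt w (X \<inter> \<Union>S) \<ge> wt w X / 2) \<and>
               (\<forall>X\<in>P' - S'. wt w (X \<inter> \<Union>S) \<le> wt w X / 2))"
      using assms(6) unfolding mutual_corr_def by blast
    have "card S' \<in> {1, card P' - 1}"
    proof (rule side[OF assms(1,4) U1 SP(4-6) _ F])
      fix T assume "T \<subseteq> P'" "T \<noteq> {}" "T \<noteq> P'"
      then show "corr_cost w S' S \<le> corr_cost w T S"
        using o(2)[of S T] SP cost_sym[of w] unfolding is_Cwedge_corr_def is_corr_def by auto
    qed
    then show ?thesis by blast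
  qed
qed

end
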